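(* $\alpha^*=\overline{\alpha}$ if and only if $m\le 2d-2$ and $p_0=p_i$ for some $i\in\{m-d+1,\dots,d-1\}$.
   Context: Fix integers $d\ge 3$ and $m\ge d$ and a probability vector $\mathbf p=(p_0,\dots,p_m)$ with all $p_i>0$ which is regular, normalized so that $p_0\le p_m\le p_i$ for all $1\le i\le m-1$. Let $\mathcal A=\{0,\dots,m\}$, $\mathcal A^*$ the set of finite words, $|\sigma|$ the length and $\sigma_j$ the $j$-th letter of $\sigma$. Put $\delta=-1/\log d$. Let $a=1+\lfloor (m-d)/(d-1)\rfloor$, set $p_j=0$ for $j\notin\mathcal A$, and let $M_i$ ($i\in\mathcal A$) be the $(2a+1)\times(2a+1)$ matrix indexed by $\{-a,\dots,a\}^2$ with $M_i(k,l)=p_{k+i-ld}$; $M(\sigma)=M_{\sigma_k}\cdots M_{\sigma_1}$ for $\sigma$ of length $k$; $\rho$ is spectral radius. Set $\alpha^*=\delta\log\inf\{\rho(M(\sigma))^{1/|\sigma|}:\sigma\in\mathcal A^*,\ \sigma_1\notin\{0,m\}\}$ and $\overline{\alpha}=\delta\log p_0$. (By the paper's Theorem 1, $\alpha^*$ is also the minimal number such that every local dimension of $\mu$, the self-similar measure with $\mu(A)=\sum_i p_i\mu(dA-i)$, lies in $[\inf\Delta\mu,\alpha^*]\cup\{\delta\log p_m,\overline\alpha\}$.) *)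

theory Defs
  imports Complex_Main "Jordan_Normal_Form.Spectral_Radius"
begin

definition pext :: "nat \<Rightarrow> (nat \<Rightarrow> real) \<Rightarrow> int \<Rightarrow> real" where
  "pext m p j = (if 0 \<le> j \<and> j \<le> int m then p (nat j) else 0)"

definition aconst :: "nat \<Rightarrow> nat \<Rightarrow> nat" where
  "aconst d m = 1 + (m - d) div (d - 1)"

text \<open>The (2a+1)x(2a+1) matrix M_i; row/column r in {0..2a} corresponds to index r - a in {-a..a}.
  Entry (k,l) is p_{k+i-l d}.\<close>
definition Mi :: "nat \<Rightarrow> nat \<Rightarrow> (nat \<Rightarrow> real) \<Rightarrow> nat \<Rightarrow> complex mat" where
  "Mi d m p i = (let a = aconst d m in
     mat (2*a+1) (2*a+1) (\<lambda>(r, c). complex_of_real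
        (pext m p ((int r - int a) + int i - (int c - int a) * int d))))"

fun Mword :: "nat \<Rightarrow> nat \<Rightarrow> (nat \<Rightarrow> real) \<Rightarrow> nat list \<Rightarrow> complex mat" where
  "Mword d m p [] = 1\<^sub>m (2 * aconst d m + 1)"
| "Mword d m p (x # xs) = Mword d m p xs * Mi d m p x"

definition alpha_star :: "nat \<Rightarrow> nat \<Rightarrow> (nat \<Rightarrow> real) \<Rightarrow> real" where
  "alpha_star d m p = (- 1 / ln (real d)) *
     ln (Inf {spectral_radius (Mword d m p \<sigma>) powr (1 / real (length \<sigma>)) | \<sigma>.
              \<sigma> \<noteq> [] \<and> set \<sigma> \<subseteq> {0..m} \<and> hd \<sigma> \<notin> {0, m}})"

definition alpha_bar :: "nat \<Rightarrow> (nat \<Rightarrow> real) \<Rightarrow> real" where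
  "alpha_bar d p = (- 1 / ln (real d)) * ln (p 0)"

end

theory Submission
  imports Defs
begin

lemma pow_smult_mat:
  fixes A :: "'a :: comm_ring_1 mat"
  assumes A: "A \<in> carrier_mat n n"
  shows "(c \<cdot>\<^sub>m A) ^\<^sub>m k = (c ^ k) \<cdot>\<^sub>m (A ^\<^sub>m k)"
proof (induction k)
  case 0
  then show ?case using A by (auto intro!: eq_matI)
next
  case (Suc k)
  have "(c \<cdot>\<^sub>m A) ^\<^sub>m Suc k = (c ^ k \<cdot>\<^sub>m A ^\<^sub>m k) * (c \<cdot>\<^sub>m A)" using Suc by simp
  also have "\<dots> = c ^ k \<cdot>\<^sub>m (A ^\<^sub>m k * (c \<cdot>\<^sub>m A))"
    using A by (intro mult_smult_assoc_mat) auto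
  also have "\<dots> = c ^ k \<cdot>\<^sub>m (c \<cdot>\<^sub>m (A ^\<^sub>m k * A))"
    using A by (subst mult_smult_distrib) auto
  also have "\<dots> = c ^ Suc k \<cdot>\<^sub>m (A ^\<^sub>m Suc k)"
    by (auto simp: ac_simps)
  finally show ?case .
qed

lemma mult_mat_vec_index_sum:
  assumes "i < dim_row M" "dim_col M = dim_vec u"
  shows "(M *\<^sub>v u) $ i = (\<Sum>j<dim_vec u. M $$ (i,j) * u $ j)"
  using assms by (auto simp: scalar_prod_def lessThan_atLeast0 intro!: sum.cong)

lemma smult_mat_mult_vec:
  assumes "dim_col M = dim_vec u"
  shows "(c \<cdot>\<^sub>m M) *\<^sub>v u = c \<cdot>\<^sub>v (M *\<^sub>v u)"
  using assms by (intro eq_vecI) (auto simp: scalar_prod_def sum_distrib_left ac_simps intro!: sum.cong)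

lemma sr_lower:
  fixes A :: "complex mat" and u :: "complex vec"
  assumes A: "A \<in> carrier_mat n n" and u: "u \<in> carrier_vec n" and i: "i < n"
    and lam: "lam > 0" and wi: "w > 0"
    and grow: "\<And>k. lam ^ k * w \<le> Re ((A ^\<^sub>m k *\<^sub>v u) $ i)"
  shows "lam \<le> spectral_radius A"
proof (rule ccontr)
  assume "\<not> ?thesis" hence lt: "spectral_radius A < lam" by simp
  have n: "n > 0" using i by auto
  have r0: "0 \<le> spectral_radius A" using spectral_radius_mem_max(1)[OF A n] by auto
  define mu where "mu = (spectral_radius A + lam) / 2"
  have mu: "0 < mu" "spectral_radius A < mu" "mu < lam" using r0 lt unfolding mu_def by auto
  define B where "B = complex_of_real (1/mu) \<cdot>\<^sub>m A"
  have B: "B \<in> carrier_mat n n" using A unfolding B_def by auto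
  have AB: "A = complex_of_real mu \<cdot>\<^sub>m B"
    unfolding B_def using mu(1) A by (auto intro!: eq_matI)
  have "spectral_radius B < 1"
  proof -
    from spectral_radius_mem_max(1)[OF B n] obtain e
      where e: "e \<in> spectrum B" "spectral_radius B = norm e" by auto
    then obtain v where ev: "eigenvector B v e" unfolding spectrum_def eigenvalue_def by auto
    have "A *\<^sub>v v = (complex_of_real mu * e) \<cdot>\<^sub>v v"
    proof -
      have vc: "v \<in> carrier_vec n" "B *\<^sub>v v = e \<cdot>\<^sub>v v" using ev B unfolding eigenvector_def by auto
      have "A *\<^sub>v v = complex_of_real mu \<cdot>\<^sub>v (B *\<^sub>v v)"
        unfolding AB using vc B by (intro smult_mat_mult_vec) auto
      also have "\<dots> = (complex_of_real mu * e) \<cdot>\<^sub>v v" using vc by (simp add: smult_smult_assoc)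
      finally show ?thesis .
    qed
    hence "eigenvector A v (complex_of_real mu * e)"
      using ev A B unfolding eigenvector_def by auto
    hence "norm (complex_of_real mu * e) \<in> norm ` spectrum A"
      unfolding spectrum_def eigenvalue_def by auto
    from spectral_radius_mem_max(2)[OF A n this]
    have "mu * norm e \<le> spectral_radius A" using mu(1) by (simp add: norm_mult)
    have "norm e < 1"
    proof (rule ccontr)
      assume "\<not> norm e < 1"
      hence "mu * 1 \<le> mu * norm e" using mu(1) by (intro mult_left_mono) auto
      thus False using mu \<open>mu * norm e \<le> spectral_radius A\<close> by linarith
    qed
    thus ?thesis using e by simp
  qed
  from spectral_radius_jnf_norm_bound_less_1_upper_triangular[OF B this]
  obtain c where c: "\<And>k. norm_bound (B ^\<^sub>m k) c" by auto
  define C where "C = c * (\<Sum>j<n. norm (u $ j))"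
  have bnd: "(lam / mu) ^ k \<le> C / w" for k
  proof -
    have Bk: "B ^\<^sub>m k \<in> carrier_mat n n" using B by auto
    have "A ^\<^sub>m k = (complex_of_real mu) ^ k \<cdot>\<^sub>m (B ^\<^sub>m k)"
      unfolding AB by (rule pow_smult_mat[OF B])
    moreover have "((complex_of_real mu) ^ k \<cdot>\<^sub>m (B ^\<^sub>m k)) *\<^sub>v u = (complex_of_real mu) ^ k \<cdot>\<^sub>v ((B ^\<^sub>m k) *\<^sub>v u)"
      using Bk u by (intro smult_mat_mult_vec) auto
    ultimately have eq: "(A ^\<^sub>m k *\<^sub>v u) $ i = (complex_of_real mu) ^ k * ((B ^\<^sub>m k *\<^sub>v u) $ i)"
      using i Bk u B by (simp add: carrier_matD)
    have "norm ((B ^\<^sub>m k *\<^sub>v u) $ i) = norm (\<Sum>j<n. (B ^\<^sub>m k) $$ (i,j) * u $ j)"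
      using i Bk u by (subst mult_mat_vec_index_sum) auto
    also have "\<dots> \<le> (\<Sum>j<n. norm ((B ^\<^sub>m k) $$ (i,j) * u $ j))" by (rule norm_sum)
    also have "\<dots> \<le> (\<Sum>j<n. c * norm (u $ j))"
    proof (rule sum_mono)
      fix j assume "j \<in> {..<n}"
      hence "norm ((B ^\<^sub>m k) $$ (i,j)) \<le> c" using c[of k] i Bk B unfolding norm_bound_def by auto
      thus "norm ((B ^\<^sub>m k) $$ (i,j) * u $ j) \<le> c * norm (u $ j)"
        by (simp add: norm_mult mult_right_mono)
    qed
    also have "\<dots> = C" unfolding C_def by (simp add: sum_distrib_left)
    finally have nb: "norm ((B ^\<^sub>m k *\<^sub>v u) $ i) \<le> C" .
    have "lam ^ k * w \<le> Re ((A ^\<^sub>m k *\<^sub>v u) $ i)" by (rule grow)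
    also have "\<dots> \<le> norm ((A ^\<^sub>m k *\<^sub>v u) $ i)" by (rule complex_Re_le_cmod)
    also have "\<dots> = mu ^ k * norm ((B ^\<^sub>m k *\<^sub>v u) $ i)"
      unfolding eq using mu(1) by (simp add: norm_mult norm_power)
    also have "\<dots> \<le> mu ^ k * C" using nb mu(1) by (simp add: mult_left_mono)
    finally have "lam ^ k * w \<le> mu ^ k * C" .
    hence "(lam / mu) ^ k * w \<le> C" using mu(1)
      by (simp add: power_divide divide_simps mult.commute)
    thus ?thesis using wi by (simp add: field_simps)
  qed
  have "1 < lam / mu" using mu by simp
  from real_arch_pow[OF this] obtain k where "C / w < (lam / mu) ^ k" by blast
  with bnd[of k] show False by simp
qed

definition grows :: "complex mat \<Rightarrow> nat \<Rightarrow> (nat \<Rightarrow> real) \<Rightarrow> real \<Rightarrow> bool" where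
  "grows A N w g \<longleftrightarrow> A \<in> carrier_mat N N \<and> (\<forall>u \<in> carrier_vec N. \<forall>t\<ge>0.
     (\<forall>r<N. t * w r \<le> Re (u $ r)) \<longrightarrow> (\<forall>r<N. t * g * w r \<le> Re ((A *\<^sub>v u) $ r)))"

lemma grows_one: "grows (1\<^sub>m N) N w 1"
  unfolding grows_def by auto

lemma grows_mult:
  assumes A: "grows A N w g1" and B: "grows B N w g2" and g: "g1 \<ge> 0" "g2 \<ge> 0"
  shows "grows (A * B) N w (g2 * g1)"
  unfolding grows_def
proof (intro conjI ballI allI impI)
  have Ac: "A \<in> carrier_mat N N" and Bc: "B \<in> carrier_mat N N" using A B unfolding grows_def by auto
  thus "A * B \<in> carrier_mat N N" by auto
  fix u :: "complex vec" and t :: real and r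
  assume u: "u \<in> carrier_vec N" and t: "0 \<le> t" and h: "\<forall>r<N. t * w r \<le> Re (u $ r)" and r: "r < N"
  have "\<forall>r<N. t * g2 * w r \<le> Re ((B *\<^sub>v u) $ r)" using B u t h unfolding grows_def by blast
  moreover have "B *\<^sub>v u \<in> carrier_vec N" using Bc u by auto
  moreover have "t * g2 \<ge> 0" using t g by auto
  ultimately have "\<forall>r<N. t * g2 * g1 * w r \<le> Re ((A *\<^sub>v (B *\<^sub>v u)) $ r)"
    using A unfolding grows_def by blast
  thus "t * (g2 * g1) * w r \<le> Re ((A * B *\<^sub>v u) $ r)" using Ac Bc u r
    by (simp add: mult.assoc)
qed

lemma grows_pow:
  assumes A: "grows A N w g" and g: "g \<ge> 0"
  shows "grows (A ^\<^sub>m k) N w (g ^ k)"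
proof (induction k)
  case 0
  have "dim_row A = N" using A unfolding grows_def by auto
  then show ?case using grows_one[of N w] by simp
next
  case (Suc k)
  from grows_mult[OF Suc A _ g] g show ?case by (simp add: mult.commute)
qed

lemma grows_Mword:
  assumes "\<And>j. j \<in> set s \<Longrightarrow> grows (Mi d m p j) (2 * aconst d m + 1) w g" and g: "g \<ge> 0"
  shows "grows (Mword d m p s) (2 * aconst d m + 1) w (g ^ length s)"
  using assms(1)
proof (induction s)
  case Nil
  then show ?case using grows_one by simp
next
  case (Cons x s)
  have "grows (Mword d m p s * Mi d m p x) (2 * aconst d m + 1) w (g * g ^ length s)"
    by (rule grows_mult) (use Cons g in auto)
  then show ?case by simp
qed

lemma grows_sr:
  assumes A: "grows A N w g" and g: "g > 0" and i: "i < N" and wi: "w i > 0"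
  shows "g \<le> spectral_radius A"
proof -
  have Ac: "A \<in> carrier_mat N N" using A unfolding grows_def by auto
  let ?u = "vec N (\<lambda>r. complex_of_real (w r))"
  show ?thesis
  proof (rule sr_lower[OF Ac _ i g wi])
    show "?u \<in> carrier_vec N" by simp
    fix k
    have "grows (A ^\<^sub>m k) N w (g ^ k)" using grows_pow[OF A] g by auto
    hence "\<forall>r<N. 1 * g ^ k * w r \<le> Re ((A ^\<^sub>m k *\<^sub>v ?u) $ r)"
      unfolding grows_def by (elim conjE, erule_tac x="?u" in ballE, erule_tac x=1 in allE) auto
    thus "g ^ k * w i \<le> Re ((A ^\<^sub>m k *\<^sub>v ?u) $ i)" using i by auto
  qed
qed

lemma Mi_carrier: "Mi d m p j \<in> carrier_mat (2 * aconst d m + 1) (2 * aconst d m + 1)"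
  unfolding Mi_def Let_def by auto

lemma Mi_index:
  assumes "r < 2 * aconst d m + 1" "c < 2 * aconst d m + 1"
  shows "Mi d m p j $$ (r, c) = complex_of_real
        (pext m p ((int r - int (aconst d m)) + int j - (int c - int (aconst d m)) * int d))"
  using assms unfolding Mi_def Let_def by auto

lemma pext_nonneg:
  assumes "\<And>i. i \<le> m \<Longrightarrow> p i > 0"
  shows "pext m p e \<ge> 0"
  using assms[of "nat e"] unfolding pext_def by (auto simp: less_imp_le nat_le_iff)

lemma grows_Mi:
  assumes pos: "\<And>i. i \<le> m \<Longrightarrow> p i > 0"
    and w: "\<And>r. w r \<ge> 0"
    and h: "\<And>r. r < 2 * aconst d m + 1 \<Longrightarrow> g * w r \<le>
       (\<Sum>l<2 * aconst d m + 1. pext m p ((int r - int (aconst d m)) + int j - (int l - int (aconst d m)) * int d) * w l)"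
  shows "grows (Mi d m p j) (2 * aconst d m + 1) w g"
  unfolding grows_def
proof (intro conjI ballI allI impI)
  let ?N = "2 * aconst d m + 1"
  let ?E = "\<lambda>r l. pext m p ((int r - int (aconst d m)) + int j - (int l - int (aconst d m)) * int d)"
  show "Mi d m p j \<in> carrier_mat ?N ?N" by (rule Mi_carrier)
  fix u :: "complex vec" and t :: real and r
  assume u: "u \<in> carrier_vec ?N" and t: "0 \<le> t" and hu: "\<forall>r<?N. t * w r \<le> Re (u $ r)" and r: "r < ?N"
  have "(Mi d m p j *\<^sub>v u) $ r = (\<Sum>l<?N. Mi d m p j $$ (r,l) * u $ l)"
    using u r Mi_carrier[of d m p j] by (subst mult_mat_vec_index_sum) auto
  also have "\<dots> = (\<Sum>l<?N. complex_of_real (?E r l) * u $ l)"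
    using r by (intro sum.cong refl) (simp add: Mi_index)
  finally have "Re ((Mi d m p j *\<^sub>v u) $ r) = (\<Sum>l<?N. ?E r l * Re (u $ l))"
    by (simp add: Re_sum)
  also have "\<dots> \<ge> (\<Sum>l<?N. ?E r l * (t * w l))"
    by (intro sum_mono mult_left_mono) (use hu pext_nonneg[OF pos] in auto)
  also have "(\<Sum>l<?N. ?E r l * (t * w l)) = t * (\<Sum>l<?N. ?E r l * w l)"
    by (subst sum_distrib_left) (rule sum.cong, auto)
  finally have "t * (\<Sum>l<?N. ?E r l * w l) \<le> Re ((Mi d m p j *\<^sub>v u) $ r)" .
  moreover have "t * (g * w r) \<le> t * (\<Sum>l<?N. ?E r l * w l)"
    using h[OF r] t by (intro mult_left_mono)
  ultimately show "t * g * w r \<le> Re ((Mi d m p j *\<^sub>v u) $ r)" by (simp add: mult.assoc)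
qed

lemma pext_ge:
  assumes "p 0 \<le> p m" and "\<And>i. 1 \<le> i \<Longrightarrow> i \<le> m - 1 \<Longrightarrow> p m \<le> p i"
    and "0 \<le> e" "e \<le> int m"
  shows "p 0 \<le> pext m p e"
proof -
  have "p 0 \<le> p (nat e)"
  proof (cases "nat e = 0 \<or> nat e = m")
    case True then show ?thesis using assms(1) by auto
  next
    case False
    hence "1 \<le> nat e" "nat e \<le> m - 1" using assms(4) by auto
    then show ?thesis using assms(1) assms(2)[of "nat e"] by auto
  qed
  thus ?thesis using assms(3,4) unfolding pext_def by auto
qed

lemma lower_bound:
  assumes pos: "\<And>i. i \<le> m \<Longrightarrow> p i > 0"
    and n1: "p 0 \<le> p m" and n2: "\<And>i. 1 \<le> i \<Longrightarrow> i \<le> m - 1 \<Longrightarrow> p m \<le> p i"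
    and s: "set s \<subseteq> {0..m}"
  shows "p 0 ^ length s \<le> spectral_radius (Mword d m p s)"
proof -
  let ?a = "aconst d m"
  let ?N = "2 * ?a + 1"
  define w where "w = (\<lambda>r. if r = ?a then 1 else (0::real))"
  have "grows (Mword d m p s) ?N w (p 0 ^ length s)"
  proof (rule grows_Mword)
    show "0 \<le> p 0" using pos[of 0] by auto
    fix j assume j: "j \<in> set s"
    hence jm: "j \<le> m" using s by auto
    show "grows (Mi d m p j) ?N w (p 0)"
    proof (rule grows_Mi[OF pos])
      show "\<And>r. 0 \<le> w r" unfolding w_def by auto
      fix r assume r: "r < ?N"
      let ?E = "\<lambda>l. pext m p ((int r - int ?a) + int j - (int l - int ?a) * int d)"
      have "(\<Sum>l<?N. ?E l * w l) = (\<Sum>l<?N. if l = ?a then ?E l else 0)"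
        unfolding w_def by (intro sum.cong) auto
      also have "\<dots> = ?E ?a" by (subst sum.delta) auto
      finally have eq: "(\<Sum>l<?N. ?E l * w l) = ?E ?a" .
      have "p 0 * w r \<le> ?E ?a"
      proof (cases "r = ?a")
        case True
        then show ?thesis unfolding w_def using pext_ge[OF n1 n2, of "int j"] jm by auto
      next
        case False
        then show ?thesis unfolding w_def using pext_nonneg[OF pos] by auto
      qed
      thus "p 0 * w r \<le> (\<Sum>l<?N. ?E l * w l)" unfolding eq .
    qed
  qed
  moreover have "p 0 ^ length s > 0" using pos[of 0] by auto
  ultimately show ?thesis by (rule grows_sr) (auto simp: w_def)
qed

lemma two_cols:
  fixes d m a k j :: int
  assumes d: "d \<ge> 3" and m: "m \<ge> 2 * d - 1" and a1: "a * (d - 1) \<le> m - 1" and a2: "a \<ge> 2"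
    and k: "- a \<le> k" "k \<le> a" and j: "0 \<le> j" "j \<le> m"
  shows "\<exists>L1 L2. L1 \<noteq> L2 \<and> - a \<le> L1 \<and> L1 \<le> a \<and> - a \<le> L2 \<and> L2 \<le> a \<and>
     0 \<le> k + j - L1 * d \<and> k + j - L1 * d \<le> m \<and> 0 \<le> k + j - L2 * d \<and> k + j - L2 * d \<le> m"
proof -
  define s where "s = k + j"
  define q where "q = s div d"
  have e: "s = q * d + s mod d" unfolding q_def by simp
  have "0 \<le> s mod d" "s mod d < d" using d by auto
  hence qd: "q * d \<le> s" "s < q * d + d" using e by linarith+
  have ad: "a * d - a \<ge> d"
  proof -
    have "2 * (d - 1) \<le> a * (d - 1)" using a2 d by (intro mult_right_mono) auto
    thus ?thesis using d by (simp add: algebra_simps)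
  qed
  have aa: "a \<le> a * d" using a2 d by simp
  show ?thesis
  proof (cases "q > a")
    case True
    hence "(a + 1) * d \<le> q * d" using d by (intro mult_right_mono) auto
    hence "a * d + d \<le> q * d" by (simp add: algebra_simps)
    hence "0 \<le> s - a * d" "s - a * d \<le> m" "0 \<le> s - (a - 1) * d" "s - (a - 1) * d \<le> m"
      using qd s_def k j ad aa d by (simp_all add: algebra_simps)
    thus ?thesis unfolding s_def using a2
      by (intro exI[of _ a] exI[of _ "a - 1"]) auto
  next
    case False
    show ?thesis
    proof (cases "q \<le> - a")
      case True
      hence "q * d \<le> (- a) * d" using d by (intro mult_right_mono) auto
      hence "0 \<le> s + a * d" "s + a * d \<le> m" "0 \<le> s + (a - 1) * d" "s + (a - 1) * d \<le> m"
        using qd s_def k j ad aa d m by (simp_all add: algebra_simps)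
      thus ?thesis unfolding s_def using a2
        by (intro exI[of _ "- a"] exI[of _ "1 - a"]) (auto simp: algebra_simps)
    next
      case False2: False
      have "0 \<le> s - q * d" "s - q * d \<le> m" "0 \<le> s - (q - 1) * d" "s - (q - 1) * d \<le> m"
        using qd m d by (simp_all add: algebra_simps)
      thus ?thesis unfolding s_def using False False2
        by (intro exI[of _ q] exI[of _ "q - 1"]) auto
    qed
  qed
qed

lemma aconst_bound:
  assumes "d \<ge> 3" "m \<ge> d"
  shows "int (aconst d m) * (int d - 1) \<le> int m - 1" "aconst d m \<ge> 1"
proof -
  have "(m - d) div (d - 1) * (d - 1) \<le> m - d" by (rule div_times_less_eq_dividend)
  moreover have "aconst d m * (d - 1) = (d - 1) + (m - d) div (d - 1) * (d - 1)"
    unfolding aconst_def by (simp only: distrib_right mult_1)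
  ultimately have "aconst d m * (d - 1) \<le> m - 1" using assms by linarith
  hence "int (aconst d m * (d - 1)) \<le> int (m - 1)" by linarith
  thus "int (aconst d m) * (int d - 1) \<le> int m - 1" using assms by (simp add: of_nat_diff)
  show "aconst d m \<ge> 1" unfolding aconst_def by simp
qed

lemma aconst_ge2:
  assumes "d \<ge> 3" "m \<ge> 2 * d - 1"
  shows "aconst d m \<ge> 2"
proof -
  have "d - 1 \<le> m - d" using assms by auto
  hence "1 \<le> (m - d) div (d - 1)" using assms by (simp add: div_greater_zero_iff Suc_le_eq)
  thus ?thesis unfolding aconst_def by simp
qed

lemma aconst_eq1:
  assumes "d \<ge> 3" "m \<le> 2 * d - 2"
  shows "aconst d m = 1"
  unfolding aconst_def using assms by simp

lemma caseA_cond: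
  assumes pos: "\<And>i. i \<le> m \<Longrightarrow> p i > 0"
    and n1: "p 0 \<le> p m" and n2: "\<And>i. 1 \<le> i \<Longrightarrow> i \<le> m - 1 \<Longrightarrow> p m \<le> p i"
    and d: "d \<ge> 3" and m: "m \<ge> 2 * d - 1" and j: "j \<le> m" and r: "r < 2 * aconst d m + 1"
  shows "2 * p 0 * 1 \<le> (\<Sum>l<2 * aconst d m + 1.
     pext m p ((int r - int (aconst d m)) + int j - (int l - int (aconst d m)) * int d) * 1)"
proof -
  let ?a = "aconst d m"
  let ?N = "2 * ?a + 1"
  let ?E = "\<lambda>l. pext m p ((int r - int ?a) + int j - (int l - int ?a) * int d)"
  have md: "m \<ge> d" using m d by auto
  from two_cols[of "int d" "int m" "int ?a" "int r - int ?a" "int j"]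
    aconst_bound[OF d md] aconst_ge2[OF d m] d m j r
  obtain L1 L2 where L: "L1 \<noteq> L2" "- int ?a \<le> L1" "L1 \<le> int ?a" "- int ?a \<le> L2" "L2 \<le> int ?a"
    "0 \<le> int r - int ?a + int j - L1 * int d" "int r - int ?a + int j - L1 * int d \<le> int m"
    "0 \<le> int r - int ?a + int j - L2 * int d" "int r - int ?a + int j - L2 * int d \<le> int m"
    by fastforce
  define l1 where "l1 = nat (L1 + int ?a)"
  define l2 where "l2 = nat (L2 + int ?a)"
  have l: "int l1 - int ?a = L1" "int l2 - int ?a = L2" "l1 \<noteq> l2" "l1 < ?N" "l2 < ?N"
    unfolding l1_def l2_def using L by auto
  have "2 * p 0 \<le> ?E l1 + ?E l2"
    using pext_ge[OF n1 n2, of "int r - int ?a + int j - L1 * int d"]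
      pext_ge[OF n1 n2, of "int r - int ?a + int j - L2 * int d"] L l(1,2) by simp
  also have "\<dots> = (\<Sum>l\<in>{l1, l2}. ?E l)" using l(3) by simp
  also have "\<dots> \<le> (\<Sum>l<?N. ?E l)"
    by (rule sum_mono2) (use l pext_nonneg[OF pos] in auto)
  finally show ?thesis by simp
qed

lemma pext_pos:
  assumes "\<And>i. i \<le> m \<Longrightarrow> p i > 0" "0 \<le> e" "e \<le> int m"
  shows "pext m p e > 0"
  using assms(1)[of "nat e"] assms(2,3) unfolding pext_def by (auto simp: nat_le_iff)

lemma caseB_cond:
  assumes pos: "\<And>i. i \<le> m \<Longrightarrow> p i > 0"
    and n1: "p 0 \<le> p m" and n2: "\<And>i. 1 \<le> i \<Longrightarrow> i \<le> m - 1 \<Longrightarrow> p m \<le> p i"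
    and d: "d \<ge> 3" and md: "m \<ge> d" and m: "m \<le> 2 * d - 2"
    and nc: "\<forall>i \<in> {m - d + 1 .. d - 1}. p 0 \<noteq> p i"
    and j: "j \<le> m" and r: "r < 3"
  shows "p 0 * (if r = 1 then 2 else 1) < (\<Sum>l<2 * aconst d m + 1.
     pext m p ((int r - int (aconst d m)) + int j - (int l - int (aconst d m)) * int d) * (if l = 1 then 2 else 1))"
proof -
  have a: "aconst d m = 1" using aconst_eq1[OF d m] .
  define x where "x = int r - 1 + int j"
  have S: "(\<Sum>l<2 * aconst d m + 1.
     pext m p ((int r - int (aconst d m)) + int j - (int l - int (aconst d m)) * int d) * (if l = 1 then 2 else 1))
     = pext m p (x + int d) + 2 * pext m p x + pext m p (x - int d)"
    unfolding a x_def by (simp add: numeral_3_eq_3 algebra_simps)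
  have mid: "p 0 < pext m p y" if "int m - int d + 1 \<le> y" "y \<le> int d - 1" for y
  proof -
    have "nat y \<in> {m - d + 1 .. d - 1}" using that md by auto
    hence "p 0 \<noteq> p (nat y)" using nc by blast
    moreover have "p 0 \<le> pext m p y" using pext_ge[OF n1 n2, where e=y] that md d by auto
    ultimately show ?thesis using that md unfolding pext_def by (auto split: if_splits)
  qed
  have ge: "p 0 \<le> pext m p y" if "0 \<le> y" "y \<le> int m" for y
    using pext_ge[OF n1 n2, where e=y] that by auto
  have ps: "0 < pext m p y" if "0 \<le> y" "y \<le> int m" for y
    using pext_pos[OF pos, where e=y] that by auto
  have nn: "0 \<le> pext m p y" for y using pext_nonneg[OF pos] .
  have p0: "p 0 > 0" using pos[of 0] by auto
  have "r = 0 \<or> r = 1 \<or> r = 2" using r by auto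
  then have "p 0 * (if r = 1 then 2 else 1) < pext m p (x + int d) + 2 * pext m p x + pext m p (x - int d)"
  proof (elim disjE)
    assume r0: "r = 0"
    show ?thesis
    proof (cases "j = 0")
      case True
      hence "x = -1" unfolding x_def r0 by simp
      hence "p 0 < pext m p (x + int d)" using mid[of "x + int d"] m md d by auto
      thus ?thesis using r0 nn[of x] nn[of "x - int d"] by auto
    next
      case False
      hence "0 \<le> x" "x \<le> int m" unfolding x_def r0 using j by auto
      thus ?thesis using r0 ge[of x] p0 nn[of "x + int d"] nn[of "x - int d"] by auto
    qed
  next
    assume r2: "r = 2"
    show ?thesis
    proof (cases "j = m")
      case True
      hence "x = int m + 1" unfolding x_def r2 by simp
      hence "p 0 < pext m p (x - int d)" using mid[of "x - int d"] m md d by auto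
      thus ?thesis using r2 nn[of x] nn[of "x + int d"] by auto
    next
      case False
      hence "0 \<le> x" "x \<le> int m" unfolding x_def r2 using j by auto
      thus ?thesis using r2 ge[of x] p0 nn[of "x + int d"] nn[of "x - int d"] by auto
    qed
  next
    assume r1: "r = 1"
    hence x: "x = int j" unfolding x_def by simp
    have "2 * p 0 < pext m p (x + int d) + 2 * pext m p x + pext m p (x - int d)"
    proof (cases "x \<le> int m - int d")
      case True
      thus ?thesis using ps[of "x + int d"] ge[of x] nn[of "x - int d"] x j by auto
    next
      case False
      show ?thesis
      proof (cases "x \<ge> int d")
        case True
        thus ?thesis using ps[of "x - int d"] ge[of x] nn[of "x + int d"] x j by auto
      next
        case False2: False
        thus ?thesis using mid[of x] False nn[of "x - int d"] nn[of "x + int d"] x j by auto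
      qed
    qed
    thus ?thesis using r1 by simp
  qed
  thus ?thesis unfolding S .
qed

lemma upper_single:
  assumes pos: "\<And>i. i \<le> m \<Longrightarrow> p i > 0"
    and n1: "p 0 \<le> p m" and n2: "\<And>i. 1 \<le> i \<Longrightarrow> i \<le> m - 1 \<Longrightarrow> p m \<le> p i"
    and d: "d \<ge> 3" and md: "m \<ge> d" and m: "m \<le> 2 * d - 2"
    and i: "i \<in> {m - d + 1 .. d - 1}" and pi: "p 0 = p i"
  shows "spectral_radius (Mi d m p i) \<le> p 0"
proof -
  have a: "aconst d m = 1" using aconst_eq1[OF d m] .
  let ?A = "Mi d m p i"
  have A: "?A \<in> carrier_mat 3 3" using Mi_carrier[of d m p i] unfolding a by simp
  have ent: "?A $$ (r, l) = complex_of_real (pext m p (int r - 1 + int i - (int l - 1) * int d))"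
    if "r < 3" "l < 3" for r l
    using Mi_index[of r d m l p i] that unfolding a by simp
  have i1: "1 \<le> i" "i \<le> m - 1" "i + d > m" "i < d" "i + d - 1 \<ge> m" "i + 1 \<le> d" using i md m d by auto
  have e10: "?A $$ (1, 0) = 0" using ent[of 1 0] i1 by (simp add: pext_def)
  have e11: "?A $$ (1, 1) = complex_of_real (p 0)" using ent[of 1 1] i1 pi by (simp add: pext_def)
  have e12: "?A $$ (1, 2) = 0" using ent[of 1 2] i1 by (simp add: pext_def)
  have e02: "?A $$ (0, 2) = 0" using ent[of 0 2] i1 by (simp add: pext_def)
  have e20: "?A $$ (2, 0) = 0" using ent[of 2 0] i1 by (simp add: pext_def)
  define x where "x = pext m p (int i - 1 + int d)"
  define y where "y = pext m p (int i + 1 - int d)"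
  have e00: "?A $$ (0, 0) = complex_of_real x" using ent[of 0 0] unfolding x_def by (simp add: algebra_simps)
  have e22: "?A $$ (2, 2) = complex_of_real y" using ent[of 2 2] unfolding y_def by (simp add: algebra_simps)
  have x: "0 \<le> x" "x \<le> p 0"
  proof -
    show "0 \<le> x" unfolding x_def by (rule pext_nonneg[OF pos])
    show "x \<le> p 0"
    proof (cases "i + d - 1 = m")
      case True
      hence "int i - 1 + int d = int m" using i1 by auto
      hence "x = p m" unfolding x_def pext_def by simp
      then show ?thesis using n2[of i] i1 pi by auto
    next
      case False
      hence "x = 0" unfolding x_def pext_def using i1 by auto
      then show ?thesis using pos[of 0] by auto
    qed
  qed
  have y: "0 \<le> y" "y \<le> p 0"
  proof -
    show "0 \<le> y" unfolding y_def by (rule pext_nonneg[OF pos])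
    show "y \<le> p 0"
    proof (cases "i + 1 = d")
      case True
      hence "y = p 0" unfolding y_def pext_def using i1 by auto
      then show ?thesis by auto
    next
      case False
      hence "y = 0" unfolding y_def pext_def using i1 by auto
      then show ?thesis using pos[of 0] by auto
    qed
  qed
  from spectral_radius_mem_max(1)[OF A] obtain e
    where e: "e \<in> spectrum ?A" "spectral_radius ?A = norm e" by auto
  then obtain v where ev: "eigenvector ?A v e" unfolding spectrum_def eigenvalue_def by auto
  have v: "v \<in> carrier_vec 3" "v \<noteq> 0\<^sub>v 3" "?A *\<^sub>v v = e \<cdot>\<^sub>v v"
    using ev A unfolding eigenvector_def by auto
  have row: "(?A *\<^sub>v v) $ r = ?A $$ (r, 0) * v $ 0 + ?A $$ (r, 1) * v $ 1 + ?A $$ (r, 2) * v $ 2"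
    if "r < 3" for r
    using that v(1) A by (subst mult_mat_vec_index_sum) (auto simp: numeral_3_eq_3 numeral_2_eq_2)
  have eq: "(e \<cdot>\<^sub>v v) $ r = e * v $ r" if "r < 3" for r using that v(1) by simp
  have r1: "complex_of_real (p 0) * v $ 1 = e * v $ 1"
    using row[of 1] eq[of 1] v(3) e10 e12 e11 by simp
  have r0: "complex_of_real x * v $ 0 + ?A $$ (0, 1) * v $ 1 = e * v $ 0"
    using row[of 0] eq[of 0] v(3) e00 e02 by simp
  have r2: "?A $$ (2, 1) * v $ 1 + complex_of_real y * v $ 2 = e * v $ 2"
    using row[of 2] eq[of 2] v(3) e20 e22 by simp
  have "v $ 0 \<noteq> 0 \<or> v $ 1 \<noteq> 0 \<or> v $ 2 \<noteq> 0"
  proof (rule ccontr)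
    assume "\<not> ?thesis"
    hence "v = 0\<^sub>v 3" using v(1)
      by (intro eq_vecI) (auto simp: numeral_3_eq_3 numeral_2_eq_2 less_Suc_eq)
    with v(2) show False by simp
  qed
  hence "norm e \<le> p 0"
  proof (elim disjE)
    assume "v $ 1 \<noteq> 0"
    hence "e = complex_of_real (p 0)" using r1 by simp
    thus ?thesis using pos[of 0] by simp
  next
    assume h: "v $ 0 \<noteq> 0"
    show ?thesis
    proof (cases "v $ 1 = 0")
      case True
      hence "e = complex_of_real x" using r0 h by simp
      thus ?thesis using x by simp
    next
      case False
      hence "e = complex_of_real (p 0)" using r1 by simp
      thus ?thesis using pos[of 0] by simp
    qed
  next
    assume h: "v $ 2 \<noteq> 0"
    show ?thesis
    proof (cases "v $ 1 = 0")
      case True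
      hence "e = complex_of_real y" using r2 h by simp
      thus ?thesis using y by simp
    next
      case False
      hence "e = complex_of_real (p 0)" using r1 by simp
      thus ?thesis using pos[of 0] by simp
    qed
  qed
  thus ?thesis using e by simp
qed

lemma root_ge:
  assumes g: "g > 0" and n: "n > 0" and le: "g ^ n \<le> r"
  shows "g \<le> r powr (1 / real n)"
proof -
  have "g = (g ^ n) powr (1 / real n)"
    using g n by (simp add: powr_realpow[symmetric] powr_powr)
  also have "\<dots> \<le> r powr (1 / real n)"
    using g le by (intro powr_mono2) auto
  finally show ?thesis .
qed

lemma growth_bound:
  assumes pos: "\<And>i. i \<le> m \<Longrightarrow> p i > 0"
    and n1: "p 0 \<le> p m" and n2: "\<And>i. 1 \<le> i \<Longrightarrow> i \<le> m - 1 \<Longrightarrow> p m \<le> p i"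
    and d: "d \<ge> 3" and md: "m \<ge> d"
    and nc: "\<not> (m \<le> 2 * d - 2 \<and> (\<exists>i \<in> {m - d + 1 .. d - 1}. p 0 = p i))"
  shows "\<exists>g > p 0. \<forall>s. set s \<subseteq> {0..m} \<longrightarrow> g ^ length s \<le> spectral_radius (Mword d m p s)"
proof (cases "m \<le> 2 * d - 2")
  case False
  hence m: "m \<ge> 2 * d - 1" by auto
  let ?N = "2 * aconst d m + 1"
  have p0: "p 0 > 0" using pos[of 0] by auto
  have "(2 * p 0) ^ length s \<le> spectral_radius (Mword d m p s)" if s: "set s \<subseteq> {0..m}" for s
  proof -
    have "grows (Mword d m p s) ?N (\<lambda>_. 1) ((2 * p 0) ^ length s)"
    proof (rule grows_Mword)
      fix j assume "j \<in> set s"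
      hence j: "j \<le> m" using s by auto
      show "grows (Mi d m p j) ?N (\<lambda>_. 1) (2 * p 0)"
        by (rule grows_Mi[OF pos]) (use caseA_cond[OF pos n1 n2 d m j] in auto)
    qed (use p0 in auto)
    from grows_sr[OF this, of 0] p0 show ?thesis by simp
  qed
  then show ?thesis using p0 by (intro exI[of _ "2 * p 0"]) auto
next
  case True
  hence m: "m \<le> 2 * d - 2" .
  have ncs: "\<forall>i \<in> {m - d + 1 .. d - 1}. p 0 \<noteq> p i" using nc m by auto
  have a: "aconst d m = 1" using aconst_eq1[OF d m] .
  define w :: "nat \<Rightarrow> real" where "w = (\<lambda>l. if l = 1 then 2 else 1)"
  define R where "R = (\<lambda>(j, r). (\<Sum>l<2 * aconst d m + 1.
     pext m p ((int r - int (aconst d m)) + int j - (int l - int (aconst d m)) * int d) * w l) / w r)"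
  define g where "g = Min (R ` ({..m} \<times> {..<3}))"
  have z: "(0, 0) \<in> {..m} \<times> {..<(3::nat)}" by auto
  have fin: "finite (R ` ({..m} \<times> {..<3}))" by simp
  have fin2: "R ` ({..m} \<times> {..<3}) \<noteq> {}" using z by blast
  have wpos: "w r > 0" for r unfolding w_def by auto
  have Rgt: "p 0 < R (j, r)" if "j \<le> m" "r < 3" for j r
  proof -
    have "p 0 * w r < (\<Sum>l<2 * aconst d m + 1.
     pext m p ((int r - int (aconst d m)) + int j - (int l - int (aconst d m)) * int d) * w l)"
      using caseB_cond[OF pos n1 n2 d md m ncs that] unfolding w_def .
    thus ?thesis unfolding R_def using wpos[of r] by (simp add: pos_less_divide_eq)
  qed
  have gp: "p 0 < g" unfolding g_def using fin fin2 Rgt by (auto simp: Min_gr_iff)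
  have gle: "g * w r \<le> (\<Sum>l<2 * aconst d m + 1.
     pext m p ((int r - int (aconst d m)) + int j - (int l - int (aconst d m)) * int d) * w l)"
    if "j \<le> m" "r < 3" for j r
  proof -
    have "g \<le> R (j, r)" unfolding g_def using fin that by (intro Min_le) auto
    thus ?thesis unfolding R_def using wpos[of r] by (simp add: pos_le_divide_eq)
  qed
  have p0: "p 0 > 0" using pos[of 0] by auto
  have "g ^ length s \<le> spectral_radius (Mword d m p s)" if s: "set s \<subseteq> {0..m}" for s
  proof -
    have "grows (Mword d m p s) (2 * aconst d m + 1) w (g ^ length s)"
    proof (rule grows_Mword)
      fix j assume "j \<in> set s"
      hence j: "j \<le> m" using s by auto
      show "grows (Mi d m p j) (2 * aconst d m + 1) w g"
        by (rule grows_Mi[OF pos]) (use gle[OF j] wpos a in \<open>auto simp: less_imp_le\<close>)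
    qed (use gp p0 in auto)
    from grows_sr[OF this, of 0] gp p0 wpos[of 0] show ?thesis by simp
  qed
  then show ?thesis using gp by blast
qed

theorem proposition17:
  fixes d m :: nat and p :: "nat \<Rightarrow> real"
  assumes "d \<ge> 3" and "m \<ge> d"
    and "\<And>i. i \<le> m \<Longrightarrow> p i > 0"
    and "(\<Sum>i\<le>m. p i) = 1"
    and "p 0 \<le> p m"
    and "\<And>i. 1 \<le> i \<Longrightarrow> i \<le> m - 1 \<Longrightarrow> p m \<le> p i"
  shows "alpha_star d m p = alpha_bar d p \<longleftrightarrow>
           (m \<le> 2 * d - 2 \<and> (\<exists>i \<in> {m - d + 1 .. d - 1}. p 0 = p i))"
proof -
  note d = assms(1) and md = assms(2) and pos = assms(3) and n1 = assms(5) and n2 = assms(6)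
  define S where "S = {spectral_radius (Mword d m p \<sigma>) powr (1 / real (length \<sigma>)) | \<sigma>.
              \<sigma> \<noteq> [] \<and> set \<sigma> \<subseteq> {0..m} \<and> hd \<sigma> \<notin> {0, m}}"
  have as: "alpha_star d m p = (- 1 / ln (real d)) * ln (Inf S)"
    unfolding alpha_star_def S_def ..
  have ab: "alpha_bar d p = (- 1 / ln (real d)) * ln (p 0)" unfolding alpha_bar_def ..
  have p0: "p 0 > 0" using pos[of 0] by auto
  have lnd: "- 1 / ln (real d) \<noteq> 0" using d by auto
  have low: "p 0 \<le> x" if "x \<in> S" for x
  proof -
    from that obtain s where x: "x = spectral_radius (Mword d m p s) powr (1 / real (length s))"
      and s: "s \<noteq> []" "set s \<subseteq> {0..m}" unfolding S_def by auto
    show ?thesis unfolding x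
      by (rule root_ge[OF p0]) (use s lower_bound[OF pos n1 n2 s(2)] in auto)
  qed
  have one: "spectral_radius (Mword d m p [1]) powr (1 / real (length [1::nat])) \<in> S"
    unfolding S_def using md d by (intro CollectI exI[of _ "[1]"]) auto
  hence Sne: "S \<noteq> {}" by auto
  have bdd: "bdd_below S" unfolding bdd_below_def using low by blast
  have Inf_ge: "p 0 \<le> Inf S" using Sne low by (intro cInf_greatest) auto
  show ?thesis
  proof
    assume eq: "alpha_star d m p = alpha_bar d p"
    hence "ln (Inf S) = ln (p 0)" unfolding as ab using lnd by simp
    hence InfS: "Inf S = p 0" using Inf_ge p0 by simp
    show "m \<le> 2 * d - 2 \<and> (\<exists>i \<in> {m - d + 1 .. d - 1}. p 0 = p i)"
    proof (rule ccontr)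
      assume nc: "\<not> ?thesis"
      from growth_bound[OF pos n1 n2 d md nc] obtain g where g: "g > p 0"
        and gb: "\<And>s. set s \<subseteq> {0..m} \<Longrightarrow> g ^ length s \<le> spectral_radius (Mword d m p s)" by auto
      have "g \<le> x" if "x \<in> S" for x
      proof -
        from that obtain s where x: "x = spectral_radius (Mword d m p s) powr (1 / real (length s))"
          and s: "s \<noteq> []" "set s \<subseteq> {0..m}" unfolding S_def by auto
        show ?thesis unfolding x
          by (rule root_ge) (use s gb[OF s(2)] g p0 in auto)
      qed
      hence "g \<le> Inf S" using Sne by (intro cInf_greatest) auto
      thus False using InfS g by simp
    qed
  next
    assume c: "m \<le> 2 * d - 2 \<and> (\<exists>i \<in> {m - d + 1 .. d - 1}. p 0 = p i)"
    then obtain i where i: "i \<in> {m - d + 1 .. d - 1}" and pi: "p 0 = p i" and m: "m \<le> 2 * d - 2" by auto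
    have MI: "Mword d m p [i] = Mi d m p i"
      using Mi_carrier[of d m p i] by simp
    have sr: "spectral_radius (Mi d m p i) \<le> p 0"
      by (rule upper_single[OF pos n1 n2 d md m i pi])
    have srn: "0 \<le> spectral_radius (Mi d m p i)"
      using spectral_radius_mem_max(1)[OF Mi_carrier[of d m p i]] by auto
    have mem: "spectral_radius (Mword d m p [i]) powr (1 / real (length [i])) \<in> S"
      unfolding S_def using i md d by (auto intro!: exI[of _ "[i]"])
    have "Inf S \<le> spectral_radius (Mword d m p [i]) powr (1 / real (length [i]))"
      by (rule cInf_lower[OF mem bdd])
    also have "\<dots> = spectral_radius (Mi d m p i)" using MI srn by simp
    finally have "Inf S \<le> p 0" using sr by simp
    hence "Inf S = p 0" using Inf_ge by simp
    thus "alpha_star d m p = alpha_bar d p" unfolding as ab by simp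
  qed
qed

end
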